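(* Let $D$ be a finite archimedean division semialgebra over $\mathbb{Z}_\mathrm{max}$. Then $\mathrm{ui}(D/\mathbb{Z}_\mathrm{max})<\infty$.
   Context: A (possibly noncommutative) semiring has a commutative associative addition with identity $0$ and an associative multiplication with identity $1$, satisfying both distributive laws; a division semiring is one in which every nonzero element is invertible. $\mathbb{Z}_\mathrm{max}=\mathbb{Z}\cup\{-\infty\}$ is the semifield with addition $\max$ and multiplication ordinary addition. A division semialgebra over a semifield $K$ is a division semiring $D$ with an injective homomorphism from $K$ into the center of $D$ (identify $K$ with its image); it is finite if $D$ is finitely generated as a left $K$-semimodule. For idempotent $K$, $D$ is archimedean over $K$ if for every $x\in D$ there exists $y\in K$ with $x+y=y$. The unit index is $\mathrm{ui}(D/K)=|D^\times/K^\times|$. *)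

theory Defs
  imports Main
begin

text \<open>The semifield Z_max = Z \<union> {-\<infinity>}: None represents -\<infinity>, Some n represents n.
  Addition is max, multiplication is ordinary addition (-\<infinity> absorbing).\<close>

type_synonym zmax = "int option"

fun zmax_add :: "zmax \<Rightarrow> zmax \<Rightarrow> zmax" where
  "zmax_add None y = y"
| "zmax_add x None = x"
| "zmax_add (Some a) (Some b) = Some (max a b)"

fun zmax_mul :: "zmax \<Rightarrow> zmax \<Rightarrow> zmax" where
  "zmax_mul (Some a) (Some b) = Some (a + b)"
| "zmax_mul _ _ = None"

definition zmax_zero :: zmax where "zmax_zero = None"
definition zmax_one :: zmax where "zmax_one = Some 0"

definition units_of_sr :: "'d::{semiring,comm_monoid_add,monoid_mult} set" where
  "units_of_sr = {x. \<exists>y. x * y = 1 \<and> y * x = 1}"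

definition division_semiring :: "'d::{semiring,comm_monoid_add,monoid_mult} itself \<Rightarrow> bool" where
  "division_semiring _ \<longleftrightarrow> (\<forall>x::'d. x \<noteq> 0 \<longrightarrow> x \<in> units_of_sr)"

definition center_sr :: "'d::{semiring,comm_monoid_add,monoid_mult} set" where
  "center_sr = {z. \<forall>x. z * x = x * z}"

definition zmax_semialgebra :: "(zmax \<Rightarrow> 'd::{semiring,comm_monoid_add,monoid_mult}) \<Rightarrow> bool" where
  "zmax_semialgebra phi \<longleftrightarrow>
     division_semiring TYPE('d) \<and>
     phi zmax_zero = 0 \<and> phi zmax_one = 1 \<and>
     (\<forall>a b. phi (zmax_add a b) = phi a + phi b) \<and>
     (\<forall>a b. phi (zmax_mul a b) = phi a * phi b) \<and>
     inj phi \<and> range phi \<subseteq> center_sr"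

text \<open>Finite: D is finitely generated as a left Z_max-semimodule (action k.x = phi k * x).\<close>
definition finite_semialgebra :: "(zmax \<Rightarrow> 'd::{semiring,comm_monoid_add,monoid_mult}) \<Rightarrow> bool" where
  "finite_semialgebra phi \<longleftrightarrow>
     (\<exists>G::'d set. finite G \<and> (\<forall>x. \<exists>c::'d \<Rightarrow> zmax. x = (\<Sum>g\<in>G. phi (c g) * g)))"

definition archimedean_over :: "(zmax \<Rightarrow> 'd::{semiring,comm_monoid_add,monoid_mult}) \<Rightarrow> bool" where
  "archimedean_over phi \<longleftrightarrow> (\<forall>x::'d. \<exists>y\<in>range phi. x + y = y)"

definition zmax_units :: "zmax set" where
  "zmax_units = {k. \<exists>l. zmax_mul k l = zmax_one \<and> zmax_mul l k = zmax_one}"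

text \<open>The quotient group D^\<times>/K^\<times>, as the set of cosets x K^\<times>, where K^\<times> = phi(Z).\<close>
definition unit_quotient :: "(zmax \<Rightarrow> 'd::{semiring,comm_monoid_add,monoid_mult}) \<Rightarrow> 'd set set" where
  "unit_quotient phi = (\<lambda>x. (\<lambda>k. x * k) ` (phi ` zmax_units)) ` units_of_sr"

end

theory Submission
  imports Defs
begin

definition lee :: "'d::{semiring,comm_monoid_add,monoid_mult} \<Rightarrow> 'd \<Rightarrow> bool" where
  "lee x y \<longleftrightarrow> x + y = y"

locale zsa =
  fixes phi :: "zmax \<Rightarrow> 'd::{semiring,comm_monoid_add,monoid_mult}"
  assumes zs: "zmax_semialgebra phi" and ar: "archimedean_over phi"
begin

definition p :: "int \<Rightarrow> 'd" where "p n = phi (Some n)"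

lemma phi0: "phi None = 0" using zs by (simp add: zmax_semialgebra_def zmax_zero_def)
lemma p0: "p 0 = 1" using zs by (simp add: zmax_semialgebra_def zmax_one_def p_def)
lemma phi_add: "phi (zmax_add a b) = phi a + phi b" using zs by (simp add: zmax_semialgebra_def)
lemma phi_mul: "phi (zmax_mul a b) = phi a * phi b" using zs by (simp add: zmax_semialgebra_def)
lemma injphi: "inj phi" using zs by (simp add: zmax_semialgebra_def)
lemma central: "phi k * x = x * phi k"
proof -
  have "phi k \<in> center_sr" using zs by (auto simp: zmax_semialgebra_def)
  thus ?thesis by (simp add: center_sr_def)
qed
lemma divs: "(x::'d) \<noteq> 0 \<Longrightarrow> x \<in> units_of_sr"
  using zs by (auto simp: zmax_semialgebra_def division_semiring_def)

lemma p_add: "p a + p b = p (max a b)"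
  using phi_add[of "Some a" "Some b"] by (simp add: p_def)
lemma p_mul: "p a * p b = p (a + b)"
  using phi_mul[of "Some a" "Some b"] by (simp add: p_def)
lemma p_neg: "p a * p (- a) = 1" by (simp add: p_mul p0)
lemma p_neg2: "p (- a) * p a = 1" by (simp add: p_mul p0)

lemma idem: "x + x = (x::'d)"
proof -
  have "x + x = x*1 + x*1" by simp
  also have "\<dots> = x*(1+1)" by (simp add: distrib_left)
  also have "(1+1::'d) = 1" using p_add[of 0 0] p0 by simp
  finally show ?thesis by simp
qed

lemma p_le: "lee (p a) (p b) \<longleftrightarrow> a \<le> b"
proof -
  have "lee (p a) (p b) \<longleftrightarrow> phi (Some (max a b)) = phi (Some b)"
    unfolding lee_def p_add by (simp add: p_def)
  also have "\<dots> \<longleftrightarrow> max a b = b" using injphi by (auto dest: injD)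
  finally show ?thesis by auto
qed

lemma lee_refl: "lee (x::'d) x" by (simp add: lee_def idem)
lemma lee_trans: "lee (x::'d) y \<Longrightarrow> lee y z \<Longrightarrow> lee x z"
  unfolding lee_def by (metis add.assoc)
lemma lee_add: "lee (x::'d) z \<Longrightarrow> lee y z \<Longrightarrow> lee (x+y) z"
  unfolding lee_def by (metis add.assoc)
lemma lee_addI1: "lee (x::'d) (x+y)"
  unfolding lee_def by (metis add.assoc idem)
lemma lee_addI2: "lee (y::'d) (x+y)"
  using lee_addI1[of y x] by (simp add: add.commute)
lemma lee_mult_left: "lee (x::'d) y \<Longrightarrow> lee (z*x) (z*y)"
  unfolding lee_def by (metis distrib_left)
lemma lee_mult_right: "lee (x::'d) y \<Longrightarrow> lee (x*z) (y*z)"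
  unfolding lee_def by (metis distrib_right)
lemma lee_zero: "lee 0 (x::'d)" by (simp add: lee_def)
lemma lee_0: "lee (x::'d) 0 \<Longrightarrow> x = 0" by (simp add: lee_def)
lemma zero_ne_one: "(0::'d) \<noteq> 1"
proof
  assume "(0::'d) = 1"
  hence "phi None = phi (Some 0)" using phi0 p0 by (simp add: p_def)
  thus False using injphi by (auto dest: injD)
qed

lemma ub: "\<exists>a. lee (x::'d) (p a)"
proof -
  obtain c where c: "x + phi c = phi c" using ar by (auto simp: archimedean_over_def)
  show ?thesis
  proof (cases c)
    case None
    then have "x = 0" using c phi0 by simp
    then show ?thesis using lee_zero by blast
  next
    case (Some a) then show ?thesis using c by (auto simp: lee_def p_def)
  qed
qed

lemma zero_mult: "0 * x = (0::'d)"
proof -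
  obtain a where "lee x (p a)" using ub by blast
  hence "lee (0*x) (0 * p a)" by (rule lee_mult_left)
  moreover have "0 * p a = 0" using phi_mul[of None "Some a"] phi0 by (simp add: p_def)
  ultimately show ?thesis using lee_0 by simp
qed

lemma p_mult_zero: "p k * 0 = 0"
  using central[of "Some k" 0] zero_mult by (simp add: p_def)

lemma units_ne0: "(x::'d) \<in> units_of_sr \<Longrightarrow> x \<noteq> 0"
  using zero_mult zero_ne_one by (auto simp: units_of_sr_def)

lemma lb: assumes "(x::'d) \<in> units_of_sr" shows "\<exists>b. lee (p b) x"
proof -
  obtain y where y: "x*y = 1" "y*x = 1" using assms by (auto simp: units_of_sr_def)
  obtain a where a: "lee y (p a)" using ub by blast
  have "lee (x*y) (x * p a)" using a by (rule lee_mult_left)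
  hence "lee (1 * p (-a)) (x * p a * p (-a))" using y by (metis lee_mult_right)
  moreover have "x * p a * p (-a) = x" by (simp add: mult.assoc p_neg)
  ultimately show ?thesis by auto
qed

lemma sum_lee: "finite A \<Longrightarrow> (\<forall>a\<in>A. lee (f a) (z::'d)) \<Longrightarrow> lee (sum f A) z"
  by (induction A rule: finite_induct) (auto simp: lee_zero lee_add)

lemma lee_sum: "finite A \<Longrightarrow> a \<in> A \<Longrightarrow> lee (f a::'d) (sum f A)"
  by (simp add: sum.remove lee_addI1)

lemma sum_image_idem: "finite A \<Longrightarrow> (sum f A::'d) = \<Sum> (f ` A)"
proof (induction A rule: finite_induct)
  case empty then show ?case by simp
next
  case (insert a A)
  show ?case
  proof (cases "f a \<in> f ` A")
    case True
    have "lee (f a) (\<Sum> (f ` A))" using lee_sum[of "f ` A" "f a" id] True insert by simp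
    then show ?thesis using insert True by (simp add: lee_def insert_absorb)
  next
    case False
    then show ?thesis using insert by simp
  qed
qed

lemma sum_const_idem: "finite A \<Longrightarrow> lee (sum (\<lambda>_. c) A) (c::'d)"
  by (rule sum_lee) (auto simp: lee_refl)

lemma uniform:
  assumes "finite G" "\<forall>g\<in>G. \<exists>n. Q g n" "\<And>g n n'. Q g n \<Longrightarrow> n \<le> n' \<Longrightarrow> Q g n'"
  shows "\<exists>N::int. N \<ge> 0 \<and> (\<forall>g\<in>G. Q g N)"
  using assms(1,2)
proof (induction G rule: finite_induct)
  case empty then show ?case by auto
next
  case (insert g A)
  then obtain N where N: "N \<ge> 0" "\<forall>h\<in>A. Q h N" by auto
  obtain n where n: "Q g n" using insert by auto
  show ?case
    apply (rule exI[of _ "max N n"])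
    using N n assms(3) by (auto intro: max.cobounded1 max.cobounded2)
qed

lemma normalize:
  assumes u: "u \<in> units_of_sr"
  shows "\<exists>n. lee (u * p n) 1 \<and> \<not> lee (u * p n) (p (-1))"
proof -
  obtain a where a: "lee u (p a)" using ub by blast
  obtain b where b: "lee (p b) u" using lb u by blast
  have ba: "b \<le> a" using lee_trans[OF b a] p_le by simp
  define S where "S = {n. lee (u * p n) 1} \<inter> {-a..-b}"
  have inS: "lee (u * p n) 1 \<Longrightarrow> n \<le> -b" for n
  proof -
    assume "lee (u * p n) 1"
    moreover have "lee (p b * p n) (u * p n)" using b by (rule lee_mult_right)
    ultimately have "lee (p (b+n)) (p 0)" using p0 p_mul lee_trans by metis
    thus ?thesis using p_le by simp
  qed
  have aS: "-a \<in> S"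
  proof -
    have "lee (u * p (-a)) (p a * p (-a))" using a by (rule lee_mult_right)
    thus ?thesis using ba by (simp add: S_def p_neg)
  qed
  have fS: "finite S" by (simp add: S_def)
  define n where "n = Max S"
  have nS: "n \<in> S" using fS aS n_def Max_in by auto
  have notn1: "\<not> lee (u * p (n+1)) 1"
  proof
    assume h: "lee (u * p (n+1)) 1"
    hence "n+1 \<in> S" using inS nS by (auto simp: S_def)
    hence "n + 1 \<le> n" using Max_ge[OF fS] n_def by blast
    thus False by simp
  qed
  show ?thesis
  proof (intro exI conjI)
    show "lee (u * p n) 1" using nS by (simp add: S_def)
    show "\<not> lee (u * p n) (p (-1))"
    proof
      assume "lee (u * p n) (p (-1))"
      hence "lee (u * p n * p 1) (p (-1) * p 1)" by (rule lee_mult_right)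
      hence "lee (u * p (n+1)) 1" by (simp add: mult.assoc p_mul p0)
      thus False using notn1 by simp
    qed
  qed
qed

lemma zmax_units_eq: "zmax_units = range (Some::int \<Rightarrow> zmax)"
proof (rule set_eqI, rule iffI)
  fix k :: zmax assume "k \<in> zmax_units"
  then obtain l where "zmax_mul k l = zmax_one" by (auto simp: zmax_units_def)
  then show "k \<in> range Some" by (cases k; cases l) (auto simp: zmax_one_def)
next
  fix k :: zmax assume "k \<in> range Some"
  then obtain a where "k = Some a" by auto
  then show "k \<in> zmax_units"
    by (auto simp: zmax_units_def zmax_one_def intro!: exI[of _ "Some (-a)"])
qed

definition coset :: "'d \<Rightarrow> 'd set" where
  "coset x = (\<lambda>k. x * k) ` (phi ` zmax_units)"

lemma coset_eq: "coset x = range (\<lambda>m. x * p m)"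
  by (auto simp: coset_def zmax_units_eq p_def image_image)

lemma coset_shift: "coset (u * p n) = coset u"
proof -
  have "range (\<lambda>m. u * p n * p m) = range (\<lambda>m. u * p m)"
  proof (rule set_eqI, rule iffI)
    fix y assume "y \<in> range (\<lambda>m. u * p n * p m)"
    then obtain m where "y = u * p n * p m" by auto
    then show "y \<in> range (\<lambda>m. u * p m)" by (auto simp: mult.assoc p_mul)
  next
    fix y assume "y \<in> range (\<lambda>m. u * p m)"
    then obtain m where "y = u * p m" by auto
    hence "y = u * p n * p (m - n)" by (simp add: mult.assoc p_mul)
    then show "y \<in> range (\<lambda>m. u * p n * p m)" by auto
  qed
  thus ?thesis by (simp add: coset_eq)
qed

lemma main_finite:
  assumes fG: "finite (G::'d set)"
    and gen: "\<forall>x. \<exists>c::'d \<Rightarrow> zmax. x = (\<Sum>g\<in>G. phi (c g) * g)"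
    and N: "\<forall>g\<in>G. lee g (p N) \<and> (g \<noteq> 0 \<longrightarrow> lee (p (-N)) g)" "N \<ge> 0"
    and x1: "lee x 1" and x2: "\<not> lee x (p (-1))"
  shows "x \<in> (\<lambda>A. p (-(2*N)) + \<Sum> A) ` Pow (insert (p (-(2*N)))
           ((\<lambda>(g,k). p k * g + p (-(2*N))) ` (G \<times> {-(2*N)-N..N})))"
proof -
  define L where "L = 2*N"
  define T where "T = insert (p (-L)) ((\<lambda>(g,k). p k * g + p (-L)) ` (G \<times> {-L-N..N}))"
  obtain c where c: "x = (\<Sum>g\<in>G. phi (c g) * g)" using gen by blast
  define t where "t g = phi (c g) * g" for g
  have tx: "g \<in> G \<Longrightarrow> lee (t g) x" for g using lee_sum[OF fG] c by (simp add: t_def)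
  have t0: "c g = None \<or> g = 0 \<Longrightarrow> t g = 0" for g
    using phi0 zero_mult p_mult_zero central[of "c g" 0] by (auto simp: t_def)
  have tle: "g \<in> G \<Longrightarrow> c g = Some k \<Longrightarrow> lee (t g) (p (k+N))" for g k
    using N lee_mult_left[of g "p N" "p k"] by (simp add: t_def p_def[symmetric] p_mul)
  have tge: "g \<in> G \<Longrightarrow> g \<noteq> 0 \<Longrightarrow> c g = Some k \<Longrightarrow> lee (p (k-N)) (t g)" for g k
    using N lee_mult_left[of "p (-N)" g "p k"] by (simp add: t_def p_def[symmetric] p_mul)
  have lowx: "lee (p (-L)) x"
  proof -
    have "\<exists>g\<in>G. \<not> lee (t g) (p (-1))"
    proof (rule ccontr)
      assume "\<not> ?thesis"
      hence "lee x (p (-1))" using sum_lee[OF fG, of t "p (-1)"] c by (simp add: t_def)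
      thus False using x2 by simp
    qed
    then obtain g where g: "g \<in> G" "\<not> lee (t g) (p (-1))" by blast
    have gc1: "c g \<noteq> None \<and> g \<noteq> 0" using g t0 lee_zero by metis
    hence gc: "c g \<noteq> None" "g \<noteq> 0" by auto
    then obtain k where k: "c g = Some k" by auto
    have "\<not> k + N \<le> -1"
    proof
      assume "k + N \<le> -1"
      hence "lee (p (k+N)) (p (-1))" using p_le by simp
      thus False using g tle[OF g(1) k] lee_trans by blast
    qed
    hence "lee (p (-L)) (p (k-N))" using p_le L_def by simp
    thus ?thesis using tge[OF g(1) gc(2) k] tx[OF g(1)] lee_trans by blast
  qed
  define a where "a g = t g + p (-L)" for g
  have aT: "g \<in> G \<Longrightarrow> a g \<in> T" for g
  proof -
    assume gG: "g \<in> G"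
    show ?thesis
    proof (cases "c g = None \<or> g = 0")
      case True then show ?thesis using t0 by (simp add: a_def T_def)
    next
      case False
      then obtain k where k: "c g = Some k" and g0: "g \<noteq> 0" by auto
      have "lee (p (k-N)) (p 0)" using tge[OF gG g0 k] tx[OF gG] x1 p0 lee_trans by metis
      hence kN: "k \<le> N" using p_le by simp
      show ?thesis
      proof (cases "k < -L-N")
        case True
        hence "lee (p (k+N)) (p (-L))" using p_le by simp
        hence "lee (t g) (p (-L))" using tle[OF gG k] lee_trans by blast
        then show ?thesis by (simp add: a_def T_def lee_def)
      next
        case False
        hence "(g,k) \<in> G \<times> {-L-N..N}" using gG kN by auto
        moreover have "a g = p k * g + p (-L)" using k by (simp add: a_def t_def p_def)
        ultimately show ?thesis unfolding T_def by (auto intro!: image_eqI[of _ _ "(g,k)"])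
      qed
    qed
  qed
  have "x = p (-L) + x" using lowx by (simp add: lee_def add.commute)
  also have "\<dots> = p (-L) + (sum t G + sum (\<lambda>_. p (-L)) G)"
  proof -
    have "lee (sum (\<lambda>_. p (-L)) G) (p (-L))" using sum_const_idem[OF fG] .
    hence "p (-L) + sum (\<lambda>_. p (-L)) G = p (-L)" by (simp add: lee_def add.commute)
    moreover have "p (-L) + (sum t G + sum (\<lambda>_. p (-L)) G) = (p (-L) + sum (\<lambda>_. p (-L)) G) + sum t G"
      by (simp add: ac_simps)
    ultimately have "p (-L) + (sum t G + sum (\<lambda>_. p (-L)) G) = p (-L) + sum t G"
      by simp
    thus ?thesis using c by (simp add: t_def)
  qed
  also have "\<dots> = p (-L) + sum a G" by (simp add: a_def sum.distrib)
  also have "\<dots> = p (-L) + \<Sum> (a ` G)" using sum_image_idem[OF fG] by simp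
  finally have "x = p (-L) + \<Sum> (a ` G)" .
  moreover have "a ` G \<in> Pow T" using aT by auto
  ultimately show ?thesis unfolding T_def L_def by blast
qed

lemma theorem_loc:
  assumes fin: "finite_semialgebra phi"
  shows "finite (unit_quotient phi)"
proof -
  obtain G :: "'d set" where fG: "finite G" and gen: "\<forall>x. \<exists>c::'d \<Rightarrow> zmax. x = (\<Sum>g\<in>G. phi (c g) * g)"
    using fin by (auto simp: finite_semialgebra_def)
  have "\<forall>g\<in>G. \<exists>n. lee g (p n) \<and> (g \<noteq> 0 \<longrightarrow> lee (p (-n)) g)"
  proof
    fix g assume "g \<in> G"
    obtain a where a: "lee g (p a)" using ub by blast
    show "\<exists>n. lee g (p n) \<and> (g \<noteq> 0 \<longrightarrow> lee (p (-n)) g)"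
    proof (cases "g = 0")
      case True then show ?thesis using a by auto
    next
      case False
      then obtain b where b: "lee (p b) g" using lb divs by blast
      show ?thesis
      proof (rule exI[of _ "max a (-b)"], intro conjI impI)
        have "lee (p a) (p (max a (-b)))" using p_le by simp
        thus "lee g (p (max a (-b)))" using a lee_trans by blast
        have "lee (p (- max a (-b))) (p b)" using p_le by simp
        thus "lee (p (- max a (- b))) g" using b lee_trans by blast
      qed
    qed
  qed
  moreover have mono: "lee g (p n') \<and> (g \<noteq> 0 \<longrightarrow> lee (p (-n')) g)"
      if "lee g (p n) \<and> (g \<noteq> 0 \<longrightarrow> lee (p (-n)) g)" "n \<le> n'" for g n n'
  proof -
    have "lee (p n) (p n')" "lee (p (-n')) (p (-n))" using p_le that(2) by auto
    thus ?thesis using that(1) lee_trans by blast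
  qed
  ultimately obtain N where N: "N \<ge> 0" "\<forall>g\<in>G. lee g (p N) \<and> (g \<noteq> 0 \<longrightarrow> lee (p (-N)) g)"
    using uniform[OF fG, of "\<lambda>g n. lee g (p n) \<and> (g \<noteq> 0 \<longrightarrow> lee (p (-n)) g)"] by blast
  define T where "T = insert (p (-(2*N)))
           ((\<lambda>(g,k). p k * g + p (-(2*N))) ` (G \<times> {-(2*N)-N..N}))"
  define R where "R = (\<lambda>A. p (-(2*N)) + \<Sum> A) ` Pow T"
  have fR: "finite R" using fG by (simp add: R_def T_def)
  have "unit_quotient phi \<subseteq> coset ` R"
  proof
    fix C assume "C \<in> unit_quotient phi"
    then obtain u where u: "u \<in> units_of_sr" "C = coset u"
      by (auto simp: unit_quotient_def coset_def)
    obtain n where n: "lee (u * p n) 1" "\<not> lee (u * p n) (p (-1))" using normalize u(1) by blast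
    have "u * p n \<in> R"
      using main_finite[OF fG gen N(2) N(1) n] by (simp add: R_def T_def)
    moreover have "C = coset (u * p n)" using u coset_shift by simp
    ultimately show "C \<in> coset ` R" by blast
  qed
  thus ?thesis using fR finite_subset by blast
qed

end

theorem mainTheorem14:
  fixes phi :: "zmax \<Rightarrow> 'd::{semiring,comm_monoid_add,monoid_mult}"
  assumes "zmax_semialgebra phi"
    and "finite_semialgebra phi"
    and "archimedean_over phi"
  shows "finite (unit_quotient phi)"
proof -
  interpret zsa phi using assms by (simp add: zsa_def)
  show ?thesis using theorem_loc assms(2) .
qed

end
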